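(* Consider the two-dimensional hierarchical heavy hitter algorithm described in the context, over trees of depths $h_1,h_2$, with threshold $\phi\in(0,1]$, and let $A=1+\min(h_1,h_2)$. There exists $\epsilon_0>0$ (depending only on $\phi,h_1,h_2$) such that for every $\epsilon\in(0,\epsilon_0)$ with $1/\epsilon$ a positive integer and every nonempty stream, the set $P$ of prefixes output by the algorithm satisfies $$|P|\le\frac{2}{A\epsilon}\left(\phi-(1+A)\epsilon-\sqrt{(\phi-(1+A)\epsilon)^2-A^2\epsilon}\right).$$
   Context: Hierarchy: rooted trees $T_1,T_2$, all leaves of $T_i$ at depth $h_i$. A prefix is a pair $p=(p_1,p_2)$ of nodes $p_i\in T_i$; fully specified if both are leaves. $e\preceq p$ means $p_i$ is an ancestor of or equal to $e_i$ for $i=1,2$; $e\prec p$ means $e\preceq p$, $e\ne p$. The label of $p$ is $(\mathrm{depth}(p_1),\mathrm{depth}(p_2))$; there are $H=(h_1+1)(h_2+1)$ labels (lattice nodes); $p$ is at level $\mathrm{depth}(p_1)+\mathrm{depth}(p_2)$, and $L=h_1+h_2$. For prefixes $h,h'$: if $h_i,h'_i$ are comparable in $T_i$ for both $i$, $\mathrm{glb}(h,h')$ is the prefix whose $i$-th coordinate is the deeper of $h_i,h'_i$; otherwise $\mathrm{glb}(h,h')$ is a trivial item with count $0$ (and estimate $0$). Stream: updates $(e,c)$, $e$ fully specified, $c$ a positive integer; $N$ is the sum of all $c$ ($N>0$). Space Saving with $m$ counters: maintains at most $m$ items with counters and error values; on $(i,c)$, a tracked $i$ has its counter increased by $c$;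 otherwise if fewer than $m$ items are tracked $i$ is added with counter $c$, error $0$; otherwise an item $j$ with the smallest counter is replaced by $i$ with counter $c(j)+c$ and error $c(j)$. Estimates: tracked $i$: $f_{\max}(i)=c(i)$, $f_{\min}(i)=c(i)-\mathrm{err}(i)$; untracked: $f_{\min}(i)=0$, $f_{\max}(i)=$ smallest counter (or $0$ if fewer than $m$ items are tracked). Algorithm: one Space Saving instance with $1/\epsilon$ counters per label; on update $(e,c)$, for every prefix $p$ with $e\preceq p$ feed $(p,c)$ to the instance of $p$'s label; $f_{\min}(p),f_{\max}(p)$ are that instance's estimates. Output procedure with threshold $\phi$: $P=\emptyset$; for levels $l=L,L-1,\dots,0$, for each prefix $p$ at level $l$: let $H_p=\{h\in P: h\prec p,\ \nexists h'\in P \text{ with } h\prec h'\prec p\}$; set $F'_p=f_{\max}(p)-\sum_{h\in H_p}f_{\min}(h)+\sum f_{\max}(q)$, where the last sum is over unordered pairs $\{h,h'\}$ of distinct elements of $H_p$ with $q=\mathrm{glb}(h,h')$ such that there is no $h_3\in H_p\setminus\{h,h'\}$ with $q\preceq h_3$; if $F'_p\ge\phi N$, add $p$ to $P$ and output $p$ with $f_{\min}(p),f_{\max}(p)$. *)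

theory Defs
  imports Complex_Main "HOL-Library.Sublist"
begin

text \<open>A node of a rooted tree is represented by the path (list of child labels) from the
root; ancestors are list prefixes, depth is length.\<close>

definition is_tree :: "'a list set \<Rightarrow> nat \<Rightarrow> bool" where
  "is_tree T h \<longleftrightarrow> finite T \<and> [] \<in> T \<and> (\<forall>x\<in>T. \<forall>y. prefix y x \<longrightarrow> y \<in> T)
     \<and> (\<forall>x\<in>T. length x \<le> h) \<and> (\<forall>x\<in>T. length x < h \<longrightarrow> (\<exists>a. x @ [a] \<in> T))"

type_synonym 'a pfx = "'a list \<times> 'a list"

definition pleq :: "'a pfx \<Rightarrow> 'a pfx \<Rightarrow> bool" where
  "pleq e p \<longleftrightarrow> prefix (fst p) (fst e) \<and> prefix (snd p) (snd e)"

definition pless :: "'a pfx \<Rightarrow> 'a pfx \<Rightarrow> bool" where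
  "pless e p \<longleftrightarrow> pleq e p \<and> e \<noteq> p"

definition label :: "'a pfx \<Rightarrow> nat \<times> nat" where
  "label p = (length (fst p), length (snd p))"

definition level :: "'a pfx \<Rightarrow> nat" where
  "level p = length (fst p) + length (snd p)"

text \<open>Greatest lower bound; None is the trivial item (count 0, estimate 0).\<close>
definition deeper :: "'a list \<Rightarrow> 'a list \<Rightarrow> 'a list" where
  "deeper x y = (if prefix x y then y else x)"

definition glb :: "'a pfx \<Rightarrow> 'a pfx \<Rightarrow> 'a pfx option" where
  "glb h h' = (if (prefix (fst h) (fst h') \<or> prefix (fst h') (fst h))
                 \<and> (prefix (snd h) (snd h') \<or> prefix (snd h') (snd h))
               then Some (deeper (fst h) (fst h'), deeper (snd h) (snd h')) else None)"

text \<open>State: tracked items map to (counter, error). Tie-breaking among items with the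
smallest counter is arbitrary, so a step is a relation.\<close>
type_synonym 'k ss_state = "'k \<Rightarrow> (nat \<times> nat) option"

definition ss_step :: "nat \<Rightarrow> 'k ss_state \<Rightarrow> 'k \<times> nat \<Rightarrow> 'k ss_state \<Rightarrow> bool" where
  "ss_step m S u S' \<longleftrightarrow> (case u of (i, c) \<Rightarrow>
     (case S i of
        Some (cnt, err) \<Rightarrow> S' = S(i \<mapsto> (cnt + c, err))
      | None \<Rightarrow>
          (if card (dom S) < m then S' = S(i \<mapsto> (c, 0))
           else (\<exists>j cj ej. S j = Some (cj, ej)
                   \<and> (\<forall>k ck ek. S k = Some (ck, ek) \<longrightarrow> cj \<le> ck)
                   \<and> S' = (S(j := None))(i \<mapsto> (cj + c, cj))))))"

definition ss_fmax :: "nat \<Rightarrow> 'k ss_state \<Rightarrow> 'k \<Rightarrow> nat" where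
  "ss_fmax m S i = (case S i of
      Some (cnt, err) \<Rightarrow> cnt
    | None \<Rightarrow> (if card (dom S) < m then 0 else Min {cnt. \<exists>k err. S k = Some (cnt, err)}))"

definition ss_fmin :: "nat \<Rightarrow> 'k ss_state \<Rightarrow> 'k \<Rightarrow> nat" where
  "ss_fmin m S i = (case S i of Some (cnt, err) \<Rightarrow> cnt - err | None \<Rightarrow> 0)"

text \<open>On update (e,c)
the unique prefix p with e \<preceq> p and label (d1,d2), i.e. (take d1 e1, take d2 e2),
is fed with count c to instance (d1,d2).\<close>
type_synonym 'a alg_state = "nat \<times> nat \<Rightarrow> 'a pfx ss_state"

definition alg_step :: "nat \<Rightarrow> nat \<Rightarrow> nat \<Rightarrow> 'a alg_state \<Rightarrow> 'a pfx \<times> nat \<Rightarrow> 'a alg_state \<Rightarrow> bool" where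
  "alg_step h1 h2 m st u st' \<longleftrightarrow> (case u of ((e1, e2), c) \<Rightarrow>
     (\<forall>d1 d2. if d1 \<le> h1 \<and> d2 \<le> h2
        then ss_step m (st (d1, d2)) ((take d1 e1, take d2 e2), c) (st' (d1, d2))
        else st' (d1, d2) = st (d1, d2)))"

inductive alg_run :: "nat \<Rightarrow> nat \<Rightarrow> nat \<Rightarrow> 'a alg_state \<Rightarrow> ('a pfx \<times> nat) list \<Rightarrow> 'a alg_state \<Rightarrow> bool"
  for h1 h2 m where
  run_Nil: "alg_run h1 h2 m st [] st"
| run_Cons: "alg_step h1 h2 m st u st' \<Longrightarrow> alg_run h1 h2 m st' us st'' \<Longrightarrow> alg_run h1 h2 m st (u # us) st''"

definition est_fmax :: "nat \<Rightarrow> 'a alg_state \<Rightarrow> 'a pfx \<Rightarrow> real" where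
  "est_fmax m st p = real (ss_fmax m (st (label p)) p)"

definition est_fmin :: "nat \<Rightarrow> 'a alg_state \<Rightarrow> 'a pfx \<Rightarrow> real" where
  "est_fmin m st p = real (ss_fmin m (st (label p)) p)"

definition Hset :: "'a pfx set \<Rightarrow> 'a pfx \<Rightarrow> 'a pfx set" where
  "Hset P p = {h \<in> P. pless h p \<and> \<not> (\<exists>h'\<in>P. pless h h' \<and> pless h' p)}"

definition pair_term :: "('a pfx \<Rightarrow> real) \<Rightarrow> 'a pfx set \<Rightarrow> 'a pfx \<Rightarrow> 'a pfx \<Rightarrow> real" where
  "pair_term fmax H h h' = (case glb h h' of
       None \<Rightarrow> 0
     | Some q \<Rightarrow> if \<not> (\<exists>h3 \<in> H - {h, h'}. pleq q h3) then fmax q else 0)"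

text \<open>The sum over unordered pairs of distinct elements is written as half the sum
over ordered pairs (the summand is symmetric).\<close>
definition Fprime :: "('a pfx \<Rightarrow> real) \<Rightarrow> ('a pfx \<Rightarrow> real) \<Rightarrow> 'a pfx set \<Rightarrow> 'a pfx \<Rightarrow> real" where
  "Fprime fmin fmax P p = (let H = Hset P p in
      fmax p - (\<Sum>h\<in>H. fmin h)
      + (\<Sum>(h, h')\<in>{(h, h'). h \<in> H \<and> h' \<in> H \<and> h \<noteq> h'}. pair_term fmax H h h') / 2)"

text \<open>out_acc n = output after processing levels L, L-1, ..., L-n+1.
Prefixes added at the same level cannot be strictly below one another, so the order
within a level is irrelevant.\<close>
primrec out_acc :: "'a list set \<Rightarrow> 'a list set \<Rightarrow> nat \<Rightarrow> real \<Rightarrow> ('a pfx \<Rightarrow> real)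
     \<Rightarrow> ('a pfx \<Rightarrow> real) \<Rightarrow> nat \<Rightarrow> 'a pfx set" where
  "out_acc T1 T2 L thr fmin fmax 0 = {}"
| "out_acc T1 T2 L thr fmin fmax (Suc n) =
     (let P = out_acc T1 T2 L thr fmin fmax n in
      P \<union> {p \<in> T1 \<times> T2. level p = L - n \<and> Fprime fmin fmax P p \<ge> thr})"

definition hhh_output :: "'a list set \<Rightarrow> 'a list set \<Rightarrow> nat \<Rightarrow> nat \<Rightarrow> nat \<Rightarrow> 'a alg_state
     \<Rightarrow> real \<Rightarrow> real \<Rightarrow> 'a pfx set" where
  "hhh_output T1 T2 h1 h2 m st \<phi> N =
     out_acc T1 T2 (h1 + h2) (\<phi> * N) (est_fmin m st) (est_fmax m st) (h1 + h2 + 1)"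

end

theory Submission
  imports Defs
begin

definition ssinv :: "nat \<Rightarrow> 'k ss_state \<Rightarrow> ('k \<Rightarrow> nat) \<Rightarrow> nat \<Rightarrow> bool" where
"ssinv m S f T \<longleftrightarrow> finite (dom S) \<and> card (dom S) \<le> m \<and>
  (\<Sum>k\<in>dom S. fst (the (S k))) = T \<and>
  (\<forall>i cnt err. S i = Some (cnt,err) \<longrightarrow> err \<le> cnt \<and> cnt - err \<le> f i \<and> f i \<le> cnt \<and>
      (card (dom S) < m \<longrightarrow> err = 0) \<and>
      (card (dom S) = m \<longrightarrow> (\<forall>k ck ek. S k = Some (ck,ek) \<longrightarrow> err \<le> ck))) \<and>
  (\<forall>i. S i = None \<longrightarrow> (card (dom S) < m \<longrightarrow> f i = 0) \<and>
      (card (dom S) = m \<longrightarrow> (\<forall>k ck ek. S k = Some (ck,ek) \<longrightarrow> f i \<le> ck)))"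

lemma ssinv_empty: "ssinv m Map.empty (\<lambda>_. 0) 0"
  unfolding ssinv_def by auto

lemma ssinvI:
  assumes "finite (dom S)" "card (dom S) \<le> m" "(\<Sum>k\<in>dom S. fst (the (S k))) = T"
   "\<And>i cnt err. S i = Some (cnt,err) \<Longrightarrow> err \<le> cnt \<and> cnt - err \<le> f i \<and> f i \<le> cnt \<and>
      (card (dom S) < m \<longrightarrow> err = 0) \<and>
      (card (dom S) = m \<longrightarrow> (\<forall>k ck ek. S k = Some (ck,ek) \<longrightarrow> err \<le> ck))"
   "\<And>i. S i = None \<Longrightarrow> (card (dom S) < m \<longrightarrow> f i = 0) \<and>
      (card (dom S) = m \<longrightarrow> (\<forall>k ck ek. S k = Some (ck,ek) \<longrightarrow> f i \<le> ck))"
  shows "ssinv m S f T"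
  using assms unfolding ssinv_def by blast

lemma ssinv_step:
  assumes st: "ss_step m S (i, c) S'" and inv: "ssinv m S f T"
  shows "ssinv m S' (\<lambda>p. f p + (if p = i then c else 0)) (T + c)"
proof -
  from inv have fin: "finite (dom S)" and cd: "card (dom S) \<le> m"
    and sm: "(\<Sum>k\<in>dom S. fst (the (S k))) = T"
    and tr: "\<And>i cnt err. S i = Some (cnt,err) \<Longrightarrow> err \<le> cnt \<and> cnt - err \<le> f i \<and> f i \<le> cnt \<and>
      (card (dom S) < m \<longrightarrow> err = 0) \<and>
      (card (dom S) = m \<longrightarrow> (\<forall>k ck ek. S k = Some (ck,ek) \<longrightarrow> err \<le> ck))"
    and un: "\<And>i. S i = None \<Longrightarrow> (card (dom S) < m \<longrightarrow> f i = 0) \<and>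
      (card (dom S) = m \<longrightarrow> (\<forall>k ck ek. S k = Some (ck,ek) \<longrightarrow> f i \<le> ck))"
    unfolding ssinv_def by blast+
  let ?f = "\<lambda>p. f p + (if p = i then c else 0)"
  show ?thesis
  proof (cases "S i")
    case (Some v)
    obtain cnt err where v: "v = (cnt, err)" by (cases v)
    have S': "S' = S(i \<mapsto> (cnt + c, err))" using st Some v unfolding ss_step_def by auto
    have dom': "dom S' = dom S" using S' Some by auto
    have idom: "i \<in> dom S" using Some by auto
    have sum': "(\<Sum>k\<in>dom S'. fst (the (S' k))) = T + c"
    proof -
      have "(\<Sum>k\<in>dom S'. fst (the (S' k))) = fst (the (S' i)) + (\<Sum>k\<in>dom S - {i}. fst (the (S' k)))"
        using dom' fin idom by (simp add: sum.remove)
      also have "(\<Sum>k\<in>dom S - {i}. fst (the (S' k))) = (\<Sum>k\<in>dom S - {i}. fst (the (S k)))"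
        using S' by (intro sum.cong) auto
      finally have a1: "(\<Sum>k\<in>dom S'. fst (the (S' k))) = fst (the (S' i)) + (\<Sum>k\<in>dom S - {i}. fst (the (S k)))" .
      have a2: "T = fst (the (S i)) + (\<Sum>k\<in>dom S - {i}. fst (the (S k)))"
        using sm fin idom by (simp add: sum.remove)
      have a3: "fst (the (S' i)) = cnt + c" "fst (the (S i)) = cnt" using S' Some v by auto
      from a1 a2 a3 show ?thesis by linarith
    qed
    show ?thesis
    proof (rule ssinvI)
      show "finite (dom S')" "card (dom S') \<le> m" using dom' fin cd by auto
      show "(\<Sum>k\<in>dom S'. fst (the (S' k))) = T + c" by (rule sum')
    next
      fix j cj ej assume a: "S' j = Some (cj, ej)"
      show "ej \<le> cj \<and> cj - ej \<le> ?f j \<and> ?f j \<le> cj \<and> (card (dom S') < m \<longrightarrow> ej = 0) \<and>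
         (card (dom S') = m \<longrightarrow> (\<forall>k ck ek. S' k = Some (ck, ek) \<longrightarrow> ej \<le> ck))"
      proof (cases "j = i")
        case True
        then have "cj = cnt + c" "ej = err" using a S' by auto
        moreover have "err \<le> cnt \<and> cnt - err \<le> f i \<and> f i \<le> cnt \<and>
          (card (dom S) < m \<longrightarrow> err = 0) \<and>
          (card (dom S) = m \<longrightarrow> (\<forall>k ck ek. S k = Some (ck,ek) \<longrightarrow> err \<le> ck))" using tr Some v by auto
        ultimately show ?thesis using True S' dom' by (auto split: if_splits)
      next
        case False
        then have Sj: "S j = Some (cj, ej)" using a S' by auto
        have "ej \<le> cj \<and> cj - ej \<le> f j \<and> f j \<le> cj \<and>
          (card (dom S) < m \<longrightarrow> ej = 0) \<and>
          (card (dom S) = m \<longrightarrow> (\<forall>k ck ek. S k = Some (ck,ek) \<longrightarrow> ej \<le> ck))" using tr Sj by auto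
        moreover have "card (dom S) = m \<longrightarrow> ej \<le> cnt + c" using tr[OF Sj] Some v by (metis le_add1 order_trans)
        ultimately show ?thesis using False S' dom' Some v by (auto split: if_splits)
      qed
    next
      fix j assume a: "S' j = None"
      then have j: "j \<noteq> i" "S j = None" using S' by (auto split: if_splits)
      show "(card (dom S') < m \<longrightarrow> ?f j = 0) \<and>
         (card (dom S') = m \<longrightarrow> (\<forall>k ck ek. S' k = Some (ck, ek) \<longrightarrow> ?f j \<le> ck))"
        using un[OF j(2)] j(1) S' dom' Some v by (auto split: if_splits) (metis le_add1 order_trans)
    qed
  next
    case None
    show ?thesis
    proof (cases "card (dom S) < m")
      case True
      have S': "S' = S(i \<mapsto> (c, 0))" using st None True unfolding ss_step_def by auto
      have dom': "dom S' = insert i (dom S)" using S' by auto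
      have inot: "i \<notin> dom S" using None by auto
      have cd': "card (dom S') = Suc (card (dom S))" using dom' fin inot by simp
      have sum': "(\<Sum>k\<in>dom S'. fst (the (S' k))) = T + c"
      proof -
        have "(\<Sum>k\<in>dom S'. fst (the (S' k))) = fst (the (S' i)) + (\<Sum>k\<in>dom S. fst (the (S' k)))"
          using dom' fin inot by simp
        also have "(\<Sum>k\<in>dom S. fst (the (S' k))) = (\<Sum>k\<in>dom S. fst (the (S k)))"
          using S' inot by (intro sum.cong) auto
        finally have a1: "(\<Sum>k\<in>dom S'. fst (the (S' k))) = fst (the (S' i)) + (\<Sum>k\<in>dom S. fst (the (S k)))" .
        have "fst (the (S' i)) = c" using S' by simp
        with a1 sm show ?thesis by linarith
      qed
      have fi: "f i = 0" using un[OF None] True by auto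
      have errs0: "\<And>j cj ej. S j = Some (cj, ej) \<Longrightarrow> ej = 0" using tr True by blast
      show ?thesis
      proof (rule ssinvI)
        show "finite (dom S')" using dom' fin by auto
        show "card (dom S') \<le> m" using cd' True by simp
        show "(\<Sum>k\<in>dom S'. fst (the (S' k))) = T + c" by (rule sum')
      next
        fix j cj ej assume a: "S' j = Some (cj, ej)"
        show "ej \<le> cj \<and> cj - ej \<le> ?f j \<and> ?f j \<le> cj \<and> (card (dom S') < m \<longrightarrow> ej = 0) \<and>
           (card (dom S') = m \<longrightarrow> (\<forall>k ck ek. S' k = Some (ck, ek) \<longrightarrow> ej \<le> ck))"
        proof (cases "j = i")
          case True
          then show ?thesis using a S' fi by auto
        next
          case False
          then have Sj: "S j = Some (cj, ej)" using a S' by auto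
          then have "ej = 0" using errs0 by blast
          then show ?thesis using tr[OF Sj] False by auto
        qed
      next
        fix j assume a: "S' j = None"
        then have j: "j \<noteq> i" "S j = None" using S' by (auto split: if_splits)
        then have "f j = 0" using un True by blast
        then show "(card (dom S') < m \<longrightarrow> ?f j = 0) \<and>
           (card (dom S') = m \<longrightarrow> (\<forall>k ck ek. S' k = Some (ck, ek) \<longrightarrow> ?f j \<le> ck))"
          using j by auto
      qed
    next
      case False
      then have full: "card (dom S) = m" using cd by simp
      obtain j cj ej where Sj: "S j = Some (cj, ej)" and mn: "\<forall>k ck ek. S k = Some (ck, ek) \<longrightarrow> cj \<le> ck"
        and S': "S' = (S(j := None))(i \<mapsto> (cj + c, cj))"
        using st None False unfolding ss_step_def by auto
      have ij: "i \<noteq> j" using Sj None by auto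
      have jdom: "j \<in> dom S" using Sj by auto
      have inot: "i \<notin> dom S" using None by auto
      have dom': "dom S' = insert i (dom S - {j})" using S' by auto
      have cd': "card (dom S') = m" using dom' fin inot jdom full
        by (simp add: card_insert_if) (metis Suc_pred card_gt_0_iff empty_iff)
      have sum': "(\<Sum>k\<in>dom S'. fst (the (S' k))) = T + c"
      proof -
        have "(\<Sum>k\<in>dom S'. fst (the (S' k))) = fst (the (S' i)) + (\<Sum>k\<in>dom S - {j}. fst (the (S' k)))"
          using dom' fin inot by simp
        also have "(\<Sum>k\<in>dom S - {j}. fst (the (S' k))) = (\<Sum>k\<in>dom S - {j}. fst (the (S k)))"
          using S' inot by (intro sum.cong) auto
        finally have a1: "(\<Sum>k\<in>dom S'. fst (the (S' k))) = fst (the (S' i)) + (\<Sum>k\<in>dom S - {j}. fst (the (S k)))" .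
        have a2: "T = fst (the (S j)) + (\<Sum>k\<in>dom S - {j}. fst (the (S k)))"
          using sm fin jdom by (simp add: sum.remove)
        have a3: "fst (the (S' i)) = cj + c" "fst (the (S j)) = cj" using S' Sj by auto
        from a1 a2 a3 show ?thesis by linarith
      qed
      have newge: "\<And>k ck ek. S' k = Some (ck, ek) \<Longrightarrow> cj \<le> ck"
        using S' mn by (auto split: if_splits)
      have fi: "f i \<le> cj" using un[OF None] full Sj by blast
      show ?thesis
      proof (rule ssinvI)
        show "finite (dom S')" using dom' fin by auto
        show "card (dom S') \<le> m" using cd' by simp
        show "(\<Sum>k\<in>dom S'. fst (the (S' k))) = T + c" by (rule sum')
      next
        fix l cl el assume a: "S' l = Some (cl, el)"
        show "el \<le> cl \<and> cl - el \<le> ?f l \<and> ?f l \<le> cl \<and> (card (dom S') < m \<longrightarrow> el = 0) \<and>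
           (card (dom S') = m \<longrightarrow> (\<forall>k ck ek. S' k = Some (ck, ek) \<longrightarrow> el \<le> ck))"
        proof (cases "l = i")
          case True
          then show ?thesis using a S' fi newge cd' by auto
        next
          case False
          then have Sl: "S l = Some (cl, el)" "l \<noteq> j" using a S' by (auto split: if_splits)
          have "el \<le> cj" using tr[OF Sl(1)] full Sj by blast
          then show ?thesis using tr[OF Sl(1)] False cd' newge by (auto intro: order_trans)
        qed
      next
        fix l assume a: "S' l = None"
        then have l: "l \<noteq> i" using S' by auto
        have "f l \<le> cj"
        proof (cases "l = j")
          case True then show ?thesis using tr[OF Sj] by auto
        next
          case False
          then have "S l = None" using a S' by (auto split: if_splits)
          then show ?thesis using un full Sj by blast
        qed
        then show "(card (dom S') < m \<longrightarrow> ?f l = 0) \<and>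
           (card (dom S') = m \<longrightarrow> (\<forall>k ck ek. S' k = Some (ck, ek) \<longrightarrow> ?f l \<le> ck))"
          using l cd' newge by (auto intro: order_trans)
      qed
    qed
  qed
qed

lemma ssinv_full_bound:
  assumes "ssinv m S f T" "card (dom S) = m" "\<And>k ck ek. S k = Some (ck,ek) \<Longrightarrow> x \<le> ck"
  shows "real m * real x \<le> real T"
proof -
  have "card (dom S) * x \<le> (\<Sum>k\<in>dom S. fst (the (S k)))"
  proof (rule sum_bounded_below[where K=x, simplified])
    fix k assume "k \<in> dom S"
    then obtain ck ek where "S k = Some (ck, ek)" by auto
    then show "x \<le> fst (the (S k))" using assms(3) by auto
  qed
  also have "\<dots> = T" using assms(1) unfolding ssinv_def by auto
  finally have "m * x \<le> T" using assms(2) by simp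
  then show ?thesis by (metis of_nat_le_iff of_nat_mult)
qed

lemma ssinv_fmax:
  assumes inv: "ssinv m S f T" and m: "m > 0"
  shows "real (ss_fmax m S i) \<le> real (f i) + real T / real m"
proof -
  have mpos: "real m > 0" using m by simp
  have Tnn: "real T / real m \<ge> 0" by simp
  have fin: "finite (dom S)" and cd: "card (dom S) \<le> m" using inv unfolding ssinv_def by auto
  show ?thesis
  proof (cases "S i")
    case (Some v)
    obtain cnt err where v: "v = (cnt, err)" by (cases v)
    have tr: "err \<le> cnt \<and> cnt - err \<le> f i \<and> f i \<le> cnt \<and>
      (card (dom S) < m \<longrightarrow> err = 0) \<and>
      (card (dom S) = m \<longrightarrow> (\<forall>k ck ek. S k = Some (ck,ek) \<longrightarrow> err \<le> ck))"
      using inv Some v unfolding ssinv_def by blast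
    have e: "real err \<le> real T / real m"
    proof (cases "card (dom S) < m")
      case True then show ?thesis using tr by simp
    next
      case False
      then have full: "card (dom S) = m" using cd by simp
      have "real m * real err \<le> real T"
        using ssinv_full_bound[OF inv full, of err] tr full by blast
      then show ?thesis using mpos by (simp add: field_simps)
    qed
    have "ss_fmax m S i = cnt" using Some v unfolding ss_fmax_def by simp
    moreover have "real cnt \<le> real (f i) + real err" using tr by linarith
    ultimately show ?thesis using e by simp
  next
    case None
    show ?thesis
    proof (cases "card (dom S) < m")
      case True
      then show ?thesis using None Tnn unfolding ss_fmax_def by simp
    next
      case False
      then have full: "card (dom S) = m" using cd by simp
      let ?C = "{cnt. \<exists>k err. S k = Some (cnt, err)}"
      have Ceq: "?C = (\<lambda>k. fst (the (S k))) ` dom S" by force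
      have Cfin: "finite ?C" using Ceq fin by simp
      have "dom S \<noteq> {}" using full m by auto
      then have Cne: "?C \<noteq> {}" using Ceq by auto
      have "Min ?C \<le> ck" if "S k = Some (ck, ek)" for k ck ek
        using Cfin that by (intro Min_le) auto
      then have "real m * real (Min ?C) \<le> real T"
        using ssinv_full_bound[OF inv full] by blast
      then have "real (Min ?C) \<le> real T / real m" using mpos by (simp add: field_simps)
      moreover have "ss_fmax m S i = Min ?C" using None False unfolding ss_fmax_def by simp
      ultimately show ?thesis by simp
    qed
  qed
qed

lemma ssinv_fmin:
  assumes inv: "ssinv m S f T" and m: "m > 0"
  shows "real (f i) \<le> real (ss_fmin m S i) + real T / real m"
proof -
  have mpos: "real m > 0" using m by simp
  have Tnn: "real T / real m \<ge> 0" by simp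
  have fin: "finite (dom S)" and cd: "card (dom S) \<le> m" using inv unfolding ssinv_def by auto
  show ?thesis
  proof (cases "S i")
    case (Some v)
    obtain cnt err where v: "v = (cnt, err)" by (cases v)
    have tr: "err \<le> cnt \<and> cnt - err \<le> f i \<and> f i \<le> cnt \<and>
      (card (dom S) < m \<longrightarrow> err = 0) \<and>
      (card (dom S) = m \<longrightarrow> (\<forall>k ck ek. S k = Some (ck,ek) \<longrightarrow> err \<le> ck))"
      using inv Some v unfolding ssinv_def by blast
    have e: "real err \<le> real T / real m"
    proof (cases "card (dom S) < m")
      case True then show ?thesis using tr by simp
    next
      case False
      then have full: "card (dom S) = m" using cd by simp
      have "real m * real err \<le> real T"
        using ssinv_full_bound[OF inv full, of err] tr full by blast
      then show ?thesis using mpos by (simp add: field_simps)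
    qed
    have "ss_fmin m S i = cnt - err" using Some v unfolding ss_fmin_def by simp
    moreover have "real (f i) \<le> real (cnt - err) + real err" using tr by simp
    ultimately show ?thesis using e by simp
  next
    case None
    have un: "(card (dom S) < m \<longrightarrow> f i = 0) \<and>
      (card (dom S) = m \<longrightarrow> (\<forall>k ck ek. S k = Some (ck,ek) \<longrightarrow> f i \<le> ck))"
      using inv None unfolding ssinv_def by blast
    show ?thesis
    proof (cases "card (dom S) < m")
      case True
      then show ?thesis using un Tnn by simp
    next
      case False
      then have full: "card (dom S) = m" using cd by simp
      have "real m * real (f i) \<le> real T"
        using ssinv_full_bound[OF inv full, of "f i"] un full by blast
      then have "real (f i) \<le> real T / real m" using mpos by (simp add: field_simps)
      then show ?thesis by simp
    qed
  qed
qed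

definition fcnt :: "nat \<Rightarrow> nat \<Rightarrow> ('a pfx \<times> nat) list \<Rightarrow> 'a pfx \<Rightarrow> nat" where
  "fcnt d1 d2 xs p = sum_list (map (\<lambda>(e, c). if (take d1 (fst e), take d2 (snd e)) = p then c else 0) xs)"

definition alginv :: "nat \<Rightarrow> nat \<Rightarrow> nat \<Rightarrow> 'a alg_state \<Rightarrow> ('a pfx \<times> nat) list \<Rightarrow> bool" where
  "alginv h1 h2 m st xs \<longleftrightarrow> (\<forall>d1 d2. (d1 \<le> h1 \<and> d2 \<le> h2 \<longrightarrow>
       ssinv m (st (d1, d2)) (fcnt d1 d2 xs) (sum_list (map snd xs))) \<and>
     (\<not> (d1 \<le> h1 \<and> d2 \<le> h2) \<longrightarrow> st (d1, d2) = Map.empty))"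

lemma alginv_empty: "alginv h1 h2 m (\<lambda>_. Map.empty) []"
  unfolding alginv_def fcnt_def by (simp add: ssinv_empty[unfolded fun_eq_iff[symmetric]] )

lemma fcnt_snoc: "fcnt d1 d2 (xs @ [((e1, e2), c)]) = (\<lambda>p. fcnt d1 d2 xs p + (if p = (take d1 e1, take d2 e2) then c else 0))"
  unfolding fcnt_def by (auto simp: fun_eq_iff)

lemma alginv_run:
  assumes "alg_run h1 h2 m st us st'" "alginv h1 h2 m st xs"
  shows "alginv h1 h2 m st' (xs @ us)"
  using assms
proof (induction arbitrary: xs rule: alg_run.induct)
  case (run_Nil st)
  then show ?case by simp
next
  case (run_Cons st u st' us st'')
  obtain e1 e2 c where u: "u = ((e1, e2), c)" by (metis prod.collapse)
  have "alginv h1 h2 m st' (xs @ [u])"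
    unfolding alginv_def
  proof (intro allI conjI impI)
    fix d1 d2
    assume r: "d1 \<le> h1 \<and> d2 \<le> h2"
    have stp: "ss_step m (st (d1, d2)) ((take d1 e1, take d2 e2), c) (st' (d1, d2))"
      using run_Cons.hyps(1) r u unfolding alg_step_def by auto
    have "ssinv m (st (d1, d2)) (fcnt d1 d2 xs) (sum_list (map snd xs))"
      using run_Cons.prems r unfolding alginv_def by blast
    from ssinv_step[OF stp this]
    show "ssinv m (st' (d1, d2)) (fcnt d1 d2 (xs @ [u])) (sum_list (map snd (xs @ [u])))"
      using u by (simp add: fcnt_snoc add.commute)
  next
    fix d1 d2
    assume r: "\<not> (d1 \<le> h1 \<and> d2 \<le> h2)"
    have "st' (d1, d2) = st (d1, d2)" using run_Cons.hyps(1) r u unfolding alg_step_def by auto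
    then show "st' (d1, d2) = Map.empty" using run_Cons.prems r unfolding alginv_def by auto
  qed
  from run_Cons.IH[OF this] u show ?case by simp
qed

lemma prefix_take_iff: "prefix x y \<longleftrightarrow> take (length x) y = x"
  by (metis prefix_def take_is_prefix append_eq_conv_conj)

lemma sum_ind_card: "finite A \<Longrightarrow> (\<Sum>x\<in>A. if P x then (1::real) else 0) = real (card {x\<in>A. P x})"
  by (simp add: sum.inter_filter[symmetric])

lemma prefix_len_eq: "prefix x y \<Longrightarrow> length x = length y \<Longrightarrow> x = y"
  by (metis append_Nil2 append_eq_conv_conj prefix_def take_all_iff order_refl)

lemma prefix_common_iff: "prefix a z \<Longrightarrow> prefix b z \<Longrightarrow> prefix a b \<longleftrightarrow> length a \<le> length b"
  using prefix_length_prefix prefix_length_le by blast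

lemma pleq_refl: "pleq x x" unfolding pleq_def by simp

lemma pleq_trans: "pleq a b \<Longrightarrow> pleq b c \<Longrightarrow> pleq a c"
  unfolding pleq_def by (meson prefix_order.order_trans)

lemma pless_level: "pless a b \<Longrightarrow> level b < level a"
proof -
  assume a: "pless a b"
  then have p1: "prefix (fst b) (fst a)" and p2: "prefix (snd b) (snd a)" and ne: "a \<noteq> b"
    unfolding pless_def pleq_def by auto
  have l1: "length (fst b) \<le> length (fst a)" and l2: "length (snd b) \<le> length (snd a)"
    using p1 p2 prefix_length_le by auto
  show ?thesis
  proof (rule ccontr)
    assume "\<not> level b < level a"
    then have "length (fst b) = length (fst a)" "length (snd b) = length (snd a)"
      using l1 l2 unfolding level_def by auto
    then have "fst b = fst a" "snd b = snd a" using p1 p2 prefix_len_eq by auto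
    then show False using ne by (simp add: prod_eq_iff)
  qed
qed

lemma Hset_sub: "Hset Q p \<subseteq> Q" unfolding Hset_def by auto

lemma Hset_antichain: "h \<in> Hset Q p \<Longrightarrow> h' \<in> Hset Q p \<Longrightarrow> \<not> pless h h'"
  unfolding Hset_def by auto

lemma cover:
  assumes fin: "finite Q" and p': "p' \<in> Q" and lt: "pless p' p"
  shows "\<exists>h\<in>Hset Q p. pleq p' h"
proof -
  let ?X = "{x\<in>Q. pleq p' x \<and> pless x p}"
  have Xfin: "finite ?X" using fin by simp
  have "p' \<in> ?X" by (simp add: p' lt pleq_refl)
  then have ne: "?X \<noteq> {}" by blast
  obtain x where x: "x \<in> ?X" and xmin: "\<And>y. y \<in> ?X \<Longrightarrow> level x \<le> level y"
  proof -
    have "Min (level ` ?X) \<in> level ` ?X" using Xfin ne by simp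
    then obtain x where "x \<in> ?X" "level x = Min (level ` ?X)" by auto
    moreover have "\<And>y. y \<in> ?X \<Longrightarrow> Min (level ` ?X) \<le> level y" using Xfin by simp
    ultimately show ?thesis using that by auto
  qed
  have "x \<in> Hset Q p"
    unfolding Hset_def
  proof (safe)
    show "x \<in> Q" "pless x p" using x by auto
  next
    fix h' assume h': "h' \<in> Q" "pless x h'" "pless h' p"
    then have "h' \<in> ?X" using x pleq_trans unfolding pless_def by blast
    then have "level x \<le> level h'" using xmin by blast
    moreover have "level h' < level x" using h'(2) pless_level by blast
    ultimately show False by simp
  qed
  then show ?thesis using x by auto
qed

lemma deeper_prefix:
  assumes "prefix x z" "prefix y z"
  shows "deeper x y = (if length x \<le> length y then y else x)"
  using assms prefix_common_iff unfolding deeper_def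
  by (metis nle_le prefix_len_eq)

lemma glb_below:
  assumes "glb h h' = Some q"
  shows "pleq q h" "pleq q h'"
proof -
  have c1: "prefix (fst h) (fst h') \<or> prefix (fst h') (fst h)"
   and c2: "prefix (snd h) (snd h') \<or> prefix (snd h') (snd h)"
   and q: "q = (deeper (fst h) (fst h'), deeper (snd h) (snd h'))"
    using assms unfolding glb_def by (auto split: if_splits)
  show "pleq q h" "pleq q h'" using c1 c2 q unfolding pleq_def deeper_def by auto
qed

lemma count_pairs:
  fixes S :: "'a pfx set" and D :: "('a pfx \<times> 'a pfx) set" and e :: "'a pfx"
  assumes finS: "finite S" and Sne: "S \<noteq> {}"
    and Se: "\<And>h. h \<in> S \<Longrightarrow> pleq e h"
    and anti: "\<And>h h'. h \<in> S \<Longrightarrow> h' \<in> S \<Longrightarrow> \<not> pless h h'"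
    and DS: "\<And>h h'. (h, h') \<in> D \<Longrightarrow> h \<in> S \<and> h' \<in> S \<and> h \<noteq> h'"
    and btw: "\<And>h h' h''. (h, h') \<in> D \<Longrightarrow> h'' \<in> S \<Longrightarrow> h'' \<noteq> h \<Longrightarrow> h'' \<noteq> h' \<Longrightarrow>
        \<exists>q. glb h h' = Some q \<and> \<not> pleq q h''"
  shows "card D \<le> 2 * (card S - 1)"
proof -
  define lf where "lf h = length (fst h)" for h :: "'a pfx"
  define ls where "ls h = length (snd h)" for h :: "'a pfx"
  have pf: "prefix (fst h) (fst e)" "prefix (snd h) (snd e)" if "h \<in> S" for h
    using Se[OF that] unfolding pleq_def by auto
  have S1: "h = h'" if "h \<in> S" "h' \<in> S" "lf h = lf h'" for h h'
  proof -
    have "fst h = fst h'" using pf[OF that(1)] pf[OF that(2)] that(3) unfolding lf_def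
      by (metis prefix_common_iff prefix_len_eq order_refl)
    moreover have "prefix (snd h) (snd h') \<or> prefix (snd h') (snd h)"
      using pf[OF that(1)] pf[OF that(2)] prefix_same_cases by blast
    ultimately have "pleq h' h \<or> pleq h h'" unfolding pleq_def by auto
    then show ?thesis using anti[OF that(1,2)] anti[OF that(2,1)] unfolding pless_def by auto
  qed
  have S2: "ls h' < ls h" if "h \<in> S" "h' \<in> S" "lf h < lf h'" for h h'
  proof (rule ccontr)
    assume "\<not> ls h' < ls h"
    then have "prefix (snd h) (snd h')" using pf[OF that(1)] pf[OF that(2)] prefix_common_iff
      unfolding ls_def by (metis not_less)
    moreover have "prefix (fst h) (fst h')" using pf[OF that(1)] pf[OF that(2)] prefix_common_iff that(3)
      unfolding lf_def by (metis less_imp_le)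
    ultimately have "pleq h' h" unfolding pleq_def by auto
    moreover have "h' \<noteq> h" using that(3) by auto
    ultimately show False using anti[OF that(2,1)] unfolding pless_def by auto
  qed
  have between: False if hD: "(h, h') \<in> D" and h'': "h'' \<in> S"
    and lens: "(lf h < lf h'' \<and> lf h'' < lf h') \<or> (lf h' < lf h'' \<and> lf h'' < lf h)" for h h' h''
  proof -
    have hS: "h \<in> S" "h' \<in> S" using DS[OF hD] by auto
    have ne: "h'' \<noteq> h" "h'' \<noteq> h'" using lens by auto
    obtain q where gq: "glb h h' = Some q" and nq: "\<not> pleq q h''" using btw[OF hD h'' ne] by blast
    have q: "q = (deeper (fst h) (fst h'), deeper (snd h) (snd h'))"
      using gq unfolding glb_def by (auto split: if_splits)
    have fq: "fst q = (if lf h \<le> lf h' then fst h' else fst h)"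
      using q deeper_prefix[OF pf(1)[OF hS(1)] pf(1)[OF hS(2)]] unfolding lf_def by simp
    have sq: "snd q = (if ls h \<le> ls h' then snd h' else snd h)"
      using q deeper_prefix[OF pf(2)[OF hS(1)] pf(2)[OF hS(2)]] unfolding ls_def by simp
    have "pleq q h''"
    proof (cases "lf h < lf h''")
      case True
      then have l: "lf h < lf h''" "lf h'' < lf h'" using lens by auto
      have a: "fst q = fst h'" using fq l by simp
      have "ls h' < ls h" using S2[OF hS(1) hS(2)] l by simp
      then have b: "snd q = snd h" using sq by simp
      have c: "ls h'' < ls h" using S2[OF hS(1) h''] l by simp
      show ?thesis unfolding pleq_def a b using l c pf[OF h''] pf[OF hS(1)] pf[OF hS(2)] prefix_common_iff
        unfolding lf_def ls_def by (metis less_imp_le)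
    next
      case False
      then have l: "lf h' < lf h''" "lf h'' < lf h" using lens by auto
      have a: "fst q = fst h" using fq l by simp
      have "ls h < ls h'" using S2[OF hS(2) hS(1)] l by simp
      then have b: "snd q = snd h'" using sq by simp
      have c: "ls h'' < ls h'" using S2[OF hS(2) h''] l by simp
      show ?thesis unfolding pleq_def a b using l c pf[OF h''] pf[OF hS(1)] pf[OF hS(2)] prefix_common_iff
        unfolding lf_def ls_def by (metis less_imp_le)
    qed
    then show False using nq by simp
  qed
  define D1 where "D1 = {x\<in>D. lf (fst x) < lf (snd x)}"
  define D2 where "D2 = {x\<in>D. lf (snd x) < lf (fst x)}"
  have Dsplit: "D \<subseteq> D1 \<union> D2"
  proof
    fix x assume x: "x \<in> D"
    obtain h h' where xx: "x = (h, h')" by (cases x)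
    have "h \<in> S" "h' \<in> S" "h \<noteq> h'" using DS[of h h'] x xx by auto
    then have "lf h \<noteq> lf h'" using S1 by blast
    then show "x \<in> D1 \<union> D2" using x xx unfolding D1_def D2_def by auto
  qed
  have finD: "finite D"
  proof -
    have "D \<subseteq> S \<times> S" using DS by auto
    then show ?thesis using finS by (meson finite_SigmaI finite_subset)
  qed
  obtain hmax where hmax: "hmax \<in> S" "\<And>h. h \<in> S \<Longrightarrow> lf h \<le> lf hmax"
  proof -
    have "Max (lf ` S) \<in> lf ` S" using finS Sne by simp
    then obtain x where "x \<in> S" "lf x = Max (lf ` S)" by auto
    then show ?thesis using that finS by auto
  qed
  obtain hmin where hmin: "hmin \<in> S" "\<And>h. h \<in> S \<Longrightarrow> lf hmin \<le> lf h"
  proof -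
    have "Min (lf ` S) \<in> lf ` S" using finS Sne by simp
    then obtain x where "x \<in> S" "lf x = Min (lf ` S)" by auto
    then show ?thesis using that finS by auto
  qed
  have c1: "card D1 \<le> card S - 1"
  proof -
    have inj: "inj_on fst D1"
    proof (rule inj_onI)
      fix x y assume x: "x \<in> D1" and y: "y \<in> D1" and eq: "fst x = fst y"
      obtain h h1 where xx: "x = (h, h1)" by (cases x)
      obtain h2 where yy: "y = (h, h2)" using eq xx by (cases y) auto
      have "(h, h1) \<in> D" "(h, h2) \<in> D" using x y xx yy unfolding D1_def by auto
      then have hs: "h \<in> S" "h1 \<in> S" "h2 \<in> S" using DS by blast+
      have l: "lf h < lf h1" "lf h < lf h2" using x y xx yy unfolding D1_def by auto
      have "lf h1 = lf h2"
      proof (rule ccontr)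
        assume "lf h1 \<noteq> lf h2"
        then consider "lf h1 < lf h2" | "lf h2 < lf h1" by linarith
        then show False
        proof cases
          case 1 then show False using between[of h h2 h1] y yy hs l unfolding D1_def by auto
        next
          case 2 then show False using between[of h h1 h2] x xx hs l unfolding D1_def by auto
        qed
      qed
      then show "x = y" using S1 hs xx yy by auto
    qed
    have sub: "fst ` D1 \<subseteq> S - {hmax}"
    proof
      fix h assume "h \<in> fst ` D1"
      then obtain h' where "(h, h') \<in> D1" by auto
      then have "h \<in> S" "h' \<in> S" "lf h < lf h'" using DS[of h h'] unfolding D1_def by auto
      then show "h \<in> S - {hmax}" using hmax(2) by fastforce
    qed
    have "card D1 = card (fst ` D1)" using inj card_image by metis
    also have "\<dots> \<le> card (S - {hmax})" using sub finS by (intro card_mono) auto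
    also have "\<dots> = card S - 1" using hmax(1) finS by simp
    finally show ?thesis .
  qed
  have c2: "card D2 \<le> card S - 1"
  proof -
    have inj: "inj_on fst D2"
    proof (rule inj_onI)
      fix x y assume x: "x \<in> D2" and y: "y \<in> D2" and eq: "fst x = fst y"
      obtain h h1 where xx: "x = (h, h1)" by (cases x)
      obtain h2 where yy: "y = (h, h2)" using eq xx by (cases y) auto
      have "(h, h1) \<in> D" "(h, h2) \<in> D" using x y xx yy unfolding D2_def by auto
      then have hs: "h \<in> S" "h1 \<in> S" "h2 \<in> S" using DS by blast+
      have l: "lf h1 < lf h" "lf h2 < lf h" using x y xx yy unfolding D2_def by auto
      have "lf h1 = lf h2"
      proof (rule ccontr)
        assume "lf h1 \<noteq> lf h2"
        then consider "lf h1 < lf h2" | "lf h2 < lf h1" by linarith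
        then show False
        proof cases
          case 1 then show False using between[of h h1 h2] x xx hs l unfolding D2_def by auto
        next
          case 2 then show False using between[of h h2 h1] y yy hs l unfolding D2_def by auto
        qed
      qed
      then show "x = y" using S1 hs xx yy by auto
    qed
    have sub: "fst ` D2 \<subseteq> S - {hmin}"
    proof
      fix h assume "h \<in> fst ` D2"
      then obtain h' where "(h, h') \<in> D2" by auto
      then have "h \<in> S" "h' \<in> S" "lf h' < lf h" using DS[of h h'] unfolding D2_def by auto
      then show "h \<in> S - {hmin}" using hmin(2) by fastforce
    qed
    have "card D2 = card (fst ` D2)" using inj card_image by metis
    also have "\<dots> \<le> card (S - {hmin})" using sub finS by (intro card_mono) auto
    also have "\<dots> = card S - 1" using hmin(1) finS by simp
    finally show ?thesis .
  qed
  have "card D \<le> card (D1 \<union> D2)" using Dsplit finD unfolding D1_def D2_def by (intro card_mono) auto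
  also have "\<dots> \<le> card D1 + card D2" by (rule card_Un_le)
  finally show ?thesis using c1 c2 by linarith
qed

lemma item_bound:
  assumes fin: "finite Q"
  shows "Fprime (\<lambda>q. if pleq e q then 1 else 0) (\<lambda>q. if pleq e q then (1::real) else 0) Q p
     \<le> (if pleq e p \<and> (\<forall>h\<in>Hset Q p. \<not> pleq e h) then 1 else 0)"
proof -
  define ind where "ind = (\<lambda>q. if pleq e q then (1::real) else 0)"
  define H where "H = Hset Q p"
  have finH: "finite H" using fin Hset_sub[of Q p] finite_subset unfolding H_def by blast
  define Pairs where "Pairs = {(h, h'). h \<in> H \<and> h' \<in> H \<and> h \<noteq> h'}"
  have finP: "finite Pairs"
  proof -
    have "Pairs \<subseteq> H \<times> H" unfolding Pairs_def by auto
    then show ?thesis using finH by (meson finite_SigmaI finite_subset)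
  qed
  define cnt where "cnt h h' \<longleftrightarrow> (\<exists>q. glb h h' = Some q \<and> \<not> (\<exists>h3\<in>H - {h, h'}. pleq q h3) \<and> pleq e q)" for h h'
  define S where "S = {h\<in>H. pleq e h}"
  define D where "D = {x\<in>Pairs. cnt (fst x) (snd x)}"
  have pt: "pair_term ind H h h' = (if cnt h h' then 1 else 0)" for h h'
    unfolding pair_term_def cnt_def ind_def by (auto split: option.split)
  have sumP: "(\<Sum>(h, h')\<in>Pairs. pair_term ind H h h') = real (card D)"
  proof -
    have "(\<Sum>(h, h')\<in>Pairs. pair_term ind H h h') = (\<Sum>x\<in>Pairs. if cnt (fst x) (snd x) then 1 else 0)"
      by (intro sum.cong) (auto simp: pt)
    also have "\<dots> = real (card D)" unfolding D_def using sum_ind_card[OF finP] by simp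
    finally show ?thesis .
  qed
  have sumH: "(\<Sum>h\<in>H. ind h) = real (card S)" unfolding ind_def S_def using sum_ind_card[OF finH] by simp
  have F: "Fprime ind ind Q p = ind p - real (card S) + real (card D) / 2"
    unfolding Fprime_def Let_def H_def[symmetric] Pairs_def[symmetric] sumP sumH by simp
  have DS: "h \<in> S \<and> h' \<in> S \<and> h \<noteq> h'" if "(h, h') \<in> D" for h h'
  proof -
    have a: "h \<in> H" "h' \<in> H" "h \<noteq> h'" "cnt h h'" using that unfolding D_def Pairs_def by auto
    then obtain q where "glb h h' = Some q" "pleq e q" unfolding cnt_def by auto
    then have "pleq e h" "pleq e h'" using glb_below pleq_trans by blast+
    then show ?thesis using a unfolding S_def by auto
  qed
  have finS: "finite S" using finH unfolding S_def by simp
  show ?thesis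
  proof (cases "pleq e p \<and> (\<forall>h\<in>Hset Q p. \<not> pleq e h)")
    case True
    then have "S = {}" unfolding S_def H_def by auto
    then have "D = {}" using DS by fast
    then show ?thesis using True F \<open>S = {}\<close> unfolding ind_def by simp
  next
    case False
    show ?thesis
    proof (cases "pleq e p")
      case False
      have "S = {}"
      proof -
        { fix h assume "h \<in> S"
          then have "pleq e h" "pless h p" unfolding S_def H_def Hset_def by auto
          then have "pleq e p" using pleq_trans unfolding pless_def by blast
          then have False using False by simp }
        then show ?thesis by blast
      qed
      then have "D = {}" using DS by fast
      then show ?thesis using False F \<open>S = {}\<close> unfolding ind_def by simp
    next
      case True
      then have Sne: "S \<noteq> {}" using \<open>\<not> (pleq e p \<and> (\<forall>h\<in>Hset Q p. \<not> pleq e h))\<close>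
        unfolding S_def H_def by auto
      have "card D \<le> 2 * (card S - 1)"
      proof (rule count_pairs[OF finS Sne, of e])
        show "\<And>h. h \<in> S \<Longrightarrow> pleq e h" unfolding S_def by auto
        show "\<And>h h'. h \<in> S \<Longrightarrow> h' \<in> S \<Longrightarrow> \<not> pless h h'"
          unfolding S_def H_def using Hset_antichain by blast
        show "\<And>h h'. (h, h') \<in> D \<Longrightarrow> h \<in> S \<and> h' \<in> S \<and> h \<noteq> h'" by (rule DS)
        show "\<exists>q. glb h h' = Some q \<and> \<not> pleq q h''"
          if "(h, h') \<in> D" "h'' \<in> S" "h'' \<noteq> h" "h'' \<noteq> h'" for h h' h''
        proof -
          have "cnt h h'" using that(1) unfolding D_def by auto
          then obtain q where "glb h h' = Some q" "\<not> (\<exists>h3\<in>H - {h, h'}. pleq q h3)" unfolding cnt_def by auto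
          moreover have "h'' \<in> H - {h, h'}" using that unfolding S_def by auto
          ultimately show ?thesis by blast
        qed
      qed
      moreover have "card S \<ge> 1" using Sne finS by (simp add: Suc_le_eq card_gt_0_iff)
      ultimately have "card D + 2 \<le> 2 * card S" by linarith
      then have "real (card D + 2) \<le> real (2 * card S)" by (simp only: of_nat_le_iff)
      then have "real (card D) \<le> 2 * (real (card S) - 1)" by (simp add: algebra_simps)
      then show ?thesis using F True unfolding ind_def
        using \<open>\<not> (pleq e p \<and> (\<forall>h\<in>Hset Q p. \<not> pleq e h))\<close> by simp
    qed
  qed
qed

lemma bcount:
  assumes fin: "finite Q" and l1: "length (fst e) = h1" and l2: "length (snd e) = h2"
  shows "card {p\<in>Q. pleq e p \<and> (\<forall>h\<in>Hset Q p. \<not> pleq e h)} \<le> 1 + min h1 h2"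
proof -
  define B where "B = {p\<in>Q. pleq e p \<and> (\<forall>h\<in>Hset Q p. \<not> pleq e h)}"
  have finB: "finite B" using fin unfolding B_def by simp
  have pf: "prefix (fst p) (fst e)" "prefix (snd p) (snd e)" if "p \<in> B" for p
    using that unfolding B_def pleq_def by auto
  have anti: "\<not> pleq p p'" if "p \<in> B" "p' \<in> B" "p \<noteq> p'" for p p'
  proof
    assume "pleq p p'"
    then have "pless p p'" using that(3) unfolding pless_def by simp
    moreover have "p \<in> Q" using that(1) unfolding B_def by auto
    ultimately obtain h where "h \<in> Hset Q p'" "pleq p h" using cover[OF fin] by blast
    moreover have "pleq e p" using that(1) unfolding B_def by auto
    ultimately show False using that(2) pleq_trans unfolding B_def by blast
  qed
  have inj1: "inj_on (\<lambda>p. length (fst p)) B"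
  proof (rule inj_onI)
    fix p p' assume a: "p \<in> B" "p' \<in> B" "length (fst p) = length (fst p')"
    have "fst p = fst p'" using pf[OF a(1)] pf[OF a(2)] a(3) by (metis prefix_common_iff prefix_len_eq order_refl)
    moreover have "prefix (snd p) (snd p') \<or> prefix (snd p') (snd p)"
      using pf[OF a(1)] pf[OF a(2)] prefix_same_cases by blast
    ultimately have "pleq p' p \<or> pleq p p'" unfolding pleq_def by auto
    then show "p = p'" using anti a by blast
  qed
  have inj2: "inj_on (\<lambda>p. length (snd p)) B"
  proof (rule inj_onI)
    fix p p' assume a: "p \<in> B" "p' \<in> B" "length (snd p) = length (snd p')"
    have "snd p = snd p'" using pf[OF a(1)] pf[OF a(2)] a(3) by (metis prefix_common_iff prefix_len_eq order_refl)
    moreover have "prefix (fst p) (fst p') \<or> prefix (fst p') (fst p)"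
      using pf[OF a(1)] pf[OF a(2)] prefix_same_cases by blast
    ultimately have "pleq p' p \<or> pleq p p'" unfolding pleq_def by auto
    then show "p = p'" using anti a by blast
  qed
  have "card B = card ((\<lambda>p. length (fst p)) ` B)" using inj1 by (simp add: card_image)
  also have "\<dots> \<le> card {0..h1}"
    using pf l1 prefix_length_le by (intro card_mono) fastforce+
  finally have c1: "card B \<le> 1 + h1" by simp
  have "card B = card ((\<lambda>p. length (snd p)) ` B)" using inj2 by (simp add: card_image)
  also have "\<dots> \<le> card {0..h2}"
    using pf l2 prefix_length_le by (intro card_mono) fastforce+
  finally have c2: "card B \<le> 1 + h2" by simp
  show ?thesis using c1 c2 unfolding B_def by simp
qed

lemma pair_term_lin:
  assumes "finite I"
  shows "pair_term (\<lambda>q. \<Sum>i\<in>I. c i * f i q) H h h' = (\<Sum>i\<in>I. c i * pair_term (f i) H h h')"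
proof (cases "glb h h'")
  case None then show ?thesis by (simp add: pair_term_def)
next
  case (Some q) then show ?thesis unfolding pair_term_def
    by (cases "\<exists>h3\<in>H - {h, h'}. pleq q h3") simp_all
qed

lemma Fprime_lin:
  assumes finI: "finite I" and fin: "finite Q"
  shows "Fprime (\<lambda>q. \<Sum>i\<in>I. c i * f i q) (\<lambda>q. \<Sum>i\<in>I. c i * f i q) Q p
       = (\<Sum>i\<in>I. c i * Fprime (f i) (f i) Q p)"
proof -
  define H where "H = Hset Q p"
  define Pairs where "Pairs = {(h, h'). h \<in> H \<and> h' \<in> H \<and> h \<noteq> h'}"
  have a: "(\<Sum>h\<in>H. \<Sum>i\<in>I. c i * f i h) = (\<Sum>i\<in>I. c i * (\<Sum>h\<in>H. f i h))"
    by (subst sum.swap) (simp add: sum_distrib_left)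
  have b: "(\<Sum>(h, h')\<in>Pairs. pair_term (\<lambda>q. \<Sum>i\<in>I. c i * f i q) H h h')
        = (\<Sum>i\<in>I. c i * (\<Sum>(h, h')\<in>Pairs. pair_term (f i) H h h'))"
  proof -
    have "(\<Sum>(h, h')\<in>Pairs. pair_term (\<lambda>q. \<Sum>i\<in>I. c i * f i q) H h h')
        = (\<Sum>x\<in>Pairs. \<Sum>i\<in>I. c i * pair_term (f i) H (fst x) (snd x))"
      using pair_term_lin[OF finI] by (intro sum.cong) auto
    also have "\<dots> = (\<Sum>i\<in>I. c i * (\<Sum>x\<in>Pairs. pair_term (f i) H (fst x) (snd x)))"
      by (subst sum.swap) (simp add: sum_distrib_left)
    also have "\<dots> = (\<Sum>i\<in>I. c i * (\<Sum>(h, h')\<in>Pairs. pair_term (f i) H h h'))"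
      by (intro sum.cong refl arg_cong2[where f="(*)"]) (auto simp: case_prod_beta)
    finally show ?thesis .
  qed
  show ?thesis
    unfolding Fprime_def Let_def H_def[symmetric] Pairs_def[symmetric] a b
    by (simp add: algebra_simps sum.distrib sum_subtractf sum_divide_distrib sum_distrib_left)
qed

lemma pair_term_err:
  assumes "\<And>q. f1 q \<le> f2 q + \<delta>" "\<delta> \<ge> 0"
  shows "pair_term f1 H h h' \<le> pair_term f2 H h h' + \<delta>"
  using assms by (cases "glb h h'") (auto simp: pair_term_def)

lemma Fprime_err:
  assumes fin: "finite Q" and up: "\<And>q. fmax q \<le> g q + \<delta>" and lo: "\<And>q. g q \<le> fmin q + \<delta>"
    and d: "\<delta> \<ge> 0"
  shows "Fprime fmin fmax Q p \<le> Fprime g g Q p + \<delta> * (1 + real (card Q) + real (card Q)^2)"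
proof -
  define H where "H = Hset Q p"
  define Pairs where "Pairs = {(h, h'). h \<in> H \<and> h' \<in> H \<and> h \<noteq> h'}"
  have finH: "finite H" using fin Hset_sub[of Q p] finite_subset unfolding H_def by blast
  have cH: "card H \<le> card Q" using fin Hset_sub[of Q p] card_mono unfolding H_def by blast
  have PH: "Pairs \<subseteq> H \<times> H" unfolding Pairs_def by auto
  have finP: "finite Pairs" using PH finH by (meson finite_SigmaI finite_subset)
  have "card Pairs \<le> card (H \<times> H)" using PH finH by (intro card_mono) auto
  also have "\<dots> = card H * card H" by (simp add: card_cartesian_product)
  also have "\<dots> \<le> card Q * card Q" using cH by (simp add: mult_le_mono)
  finally have cP: "real (card Pairs) \<le> real (card Q)^2" by (simp add: power2_eq_square flip: of_nat_mult)
  have s1: "(\<Sum>h\<in>H. g h) \<le> (\<Sum>h\<in>H. fmin h) + \<delta> * card H"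
  proof -
    have "(\<Sum>h\<in>H. g h) \<le> (\<Sum>h\<in>H. fmin h + \<delta>)" using lo by (intro sum_mono) auto
    then show ?thesis by (simp add: sum.distrib mult.commute)
  qed
  have s2: "(\<Sum>(h, h')\<in>Pairs. pair_term fmax H h h') \<le> (\<Sum>(h, h')\<in>Pairs. pair_term g H h h') + \<delta> * card Pairs"
  proof -
    have "(\<Sum>(h, h')\<in>Pairs. pair_term fmax H h h') \<le> (\<Sum>(h, h')\<in>Pairs. pair_term g H h h' + \<delta>)"
      using pair_term_err[OF up d] by (intro sum_mono) auto
    also have "\<dots> = (\<Sum>(h, h')\<in>Pairs. pair_term g H h h') + \<delta> * card Pairs"
      by (simp add: sum.distrib case_prod_beta)
    finally show ?thesis .
  qed
  have "Fprime fmin fmax Q p \<le> Fprime g g Q p + \<delta> * (1 + real (card H) + real (card Pairs) / 2)"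
    unfolding Fprime_def Let_def H_def[symmetric] Pairs_def[symmetric]
    using s1 s2 up[of p] by (simp add: algebra_simps add_divide_distrib)
  also have "\<delta> * (1 + real (card H) + real (card Pairs) / 2) \<le> \<delta> * (1 + real (card Q) + real (card Q)^2)"
  proof (rule mult_left_mono[OF _ d])
    have "real (card H) \<le> real (card Q)" using cH by simp
    moreover have "real (card Q)^2 \<ge> 0" by simp
    ultimately show "1 + real (card H) + real (card Pairs) / 2 \<le> 1 + real (card Q) + real (card Q)^2"
      using cP by linarith
  qed
  finally show ?thesis by simp
qed

lemma key:
  fixes I :: "nat set" and W :: "nat \<Rightarrow> real" and E :: "nat \<Rightarrow> 'a pfx" and Q :: "'a pfx set"
  assumes finI: "finite I" and finQ: "finite Q" and Wnn: "\<And>i. i \<in> I \<Longrightarrow> W i \<ge> 0"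
    and lens: "\<And>i. i \<in> I \<Longrightarrow> length (fst (E i)) = h1 \<and> length (snd (E i)) = h2"
    and up: "\<And>q. fmax q \<le> (\<Sum>i\<in>I. W i * (if pleq (E i) q then 1 else 0)) + \<delta>"
    and lo: "\<And>q. (\<Sum>i\<in>I. W i * (if pleq (E i) q then 1 else 0)) \<le> fmin q + \<delta>"
    and d: "\<delta> \<ge> 0"
    and valid: "\<And>p. p \<in> Q \<Longrightarrow> thr \<le> Fprime fmin fmax Q p"
  shows "thr * real (card Q) \<le> real (1 + min h1 h2) * (\<Sum>i\<in>I. W i)
          + \<delta> * real (card Q) * (1 + real (card Q) + real (card Q)^2)"
proof -
  define ind where "ind i q = (if pleq (E i) q then (1::real) else 0)" for i q
  define g where "g q = (\<Sum>i\<in>I. W i * ind i q)" for q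
  define X where "X = 1 + real (card Q) + real (card Q)^2"
  define A where "A = real (1 + min h1 h2)"
  have "thr * real (card Q) = (\<Sum>p\<in>Q. thr)" by simp
  also have "\<dots> \<le> (\<Sum>p\<in>Q. Fprime fmin fmax Q p)" using valid by (intro sum_mono) auto
  also have "\<dots> \<le> (\<Sum>p\<in>Q. Fprime g g Q p + \<delta> * X)"
    unfolding X_def
    by (intro sum_mono Fprime_err[OF finQ _ _ d]) (use up lo in \<open>auto simp: g_def ind_def\<close>)
  also have "\<dots> = (\<Sum>p\<in>Q. Fprime g g Q p) + \<delta> * real (card Q) * X" by (simp add: sum.distrib)
  also have "(\<Sum>p\<in>Q. Fprime g g Q p) = (\<Sum>p\<in>Q. \<Sum>i\<in>I. W i * Fprime (ind i) (ind i) Q p)"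
    unfolding g_def using Fprime_lin[OF finI finQ] by simp
  also have "\<dots> = (\<Sum>i\<in>I. W i * (\<Sum>p\<in>Q. Fprime (ind i) (ind i) Q p))"
    by (subst sum.swap) (simp add: sum_distrib_left)
  also have "\<dots> \<le> (\<Sum>i\<in>I. W i * A)"
  proof (intro sum_mono mult_left_mono Wnn)
    fix i assume i: "i \<in> I"
    have "(\<Sum>p\<in>Q. Fprime (ind i) (ind i) Q p)
        \<le> (\<Sum>p\<in>Q. if pleq (E i) p \<and> (\<forall>h\<in>Hset Q p. \<not> pleq (E i) h) then 1 else 0)"
      unfolding ind_def by (intro sum_mono item_bound[OF finQ])
    also have "\<dots> = real (card {p\<in>Q. pleq (E i) p \<and> (\<forall>h\<in>Hset Q p. \<not> pleq (E i) h)})"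
      by (rule sum_ind_card[OF finQ])
    also have "\<dots> \<le> A" unfolding A_def using bcount[OF finQ, of "E i" h1 h2] lens[OF i]
      by (simp only: of_nat_le_iff)
    finally show "(\<Sum>p\<in>Q. Fprime (ind i) (ind i) Q p) \<le> A" .
  qed
  also have "\<dots> = A * (\<Sum>i\<in>I. W i)" by (simp add: sum_distrib_left mult.commute)
  finally show ?thesis unfolding X_def A_def by simp
qed

definition valid :: "('a pfx \<Rightarrow> real) \<Rightarrow> ('a pfx \<Rightarrow> real) \<Rightarrow> real \<Rightarrow> 'a pfx set \<Rightarrow> bool" where
  "valid fmin fmax thr X \<longleftrightarrow> (\<forall>p\<in>X. thr \<le> Fprime fmin fmax X p)"

lemma Hset_ext:
  assumes "X \<subseteq> X'" "\<And>x. x \<in> X' - X \<Longrightarrow> \<not> pless x p"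
  shows "Hset X' p = Hset X p"
  using assms unfolding Hset_def by blast

lemma Fprime_ext:
  assumes "X \<subseteq> X'" "\<And>x. x \<in> X' - X \<Longrightarrow> \<not> pless x p"
  shows "Fprime fmin fmax X' p = Fprime fmin fmax X p"
  unfolding Fprime_def Let_def using Hset_ext[OF assms] by simp

lemma out_acc_levels:
  "p \<in> out_acc T1 T2 L thr fmin fmax n \<Longrightarrow> p \<in> T1 \<times> T2 \<and> (\<exists>j<n. level p = L - j)"
proof (induction n)
  case 0 then show ?case by simp
next
  case (Suc n)
  have "p \<in> out_acc T1 T2 L thr fmin fmax n \<or> (p \<in> T1 \<times> T2 \<and> level p = L - n)"
    using Suc.prems by (auto simp: Let_def)
  then show ?case
  proof
    assume "p \<in> out_acc T1 T2 L thr fmin fmax n"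
    then obtain j where "j < n" "level p = L - j" "p \<in> T1 \<times> T2" using Suc.IH by blast
    then show ?thesis by (intro conjI exI[of _ j]) auto
  qed auto
qed

lemma step_valid:
  assumes n: "n \<le> L" and v: "valid fmin fmax thr (out_acc T1 T2 L thr fmin fmax n)"
    and Q: "Q \<subseteq> {p \<in> T1 \<times> T2. level p = L - n \<and> thr \<le> Fprime fmin fmax (out_acc T1 T2 L thr fmin fmax n) p}"
  shows "valid fmin fmax thr (out_acc T1 T2 L thr fmin fmax n \<union> Q)"
  unfolding valid_def
proof
  let ?P = "out_acc T1 T2 L thr fmin fmax n"
  fix p assume p: "p \<in> ?P \<union> Q"
  have notbelow: "\<not> pless x p" if x: "x \<in> (?P \<union> Q) - ?P" for x
  proof
    assume "pless x p"
    then have lt: "level p < level x" by (rule pless_level)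
    have lx: "level x = L - n" using x Q by auto
    show False
    proof (cases "p \<in> ?P")
      case True
      then obtain j where "j < n" "level p = L - j" using out_acc_levels by blast
      then show False using lt lx n by linarith
    next
      case False
      then have "level p = L - n" using p Q by auto
      then show False using lt lx by simp
    qed
  qed
  have "Fprime fmin fmax (?P \<union> Q) p = Fprime fmin fmax ?P p"
    by (rule Fprime_ext) (use notbelow in auto)
  moreover have "thr \<le> Fprime fmin fmax ?P p" using p v Q unfolding valid_def by auto
  ultimately show "thr \<le> Fprime fmin fmax (?P \<union> Q) p" by simp
qed

lemma out_acc_valid:
  "n \<le> Suc L \<Longrightarrow> valid fmin fmax thr (out_acc T1 T2 L thr fmin fmax n)"
proof (induction n)
  case 0 then show ?case by (simp add: valid_def)
next
  case (Suc n)
  then have "n \<le> L" by simp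
  from step_valid[OF this Suc.IH[OF _], of "{p \<in> T1 \<times> T2. level p = L - n \<and> thr \<le> Fprime fmin fmax (out_acc T1 T2 L thr fmin fmax n) p}"]
  show ?case using Suc.prems by (simp add: Let_def)
qed

lemma out_acc_card:
  assumes fin: "finite (T1 \<times> T2)"
    and bad: "\<And>X. X \<subseteq> T1 \<times> T2 \<Longrightarrow> valid fmin fmax thr X \<Longrightarrow> card X \<noteq> Suc K"
  shows "n \<le> Suc L \<Longrightarrow> card (out_acc T1 T2 L thr fmin fmax n) \<le> K"
proof (induction n)
  case 0 then show ?case by simp
next
  case (Suc n)
  let ?P = "out_acc T1 T2 L thr fmin fmax n"
  let ?New = "{p \<in> T1 \<times> T2. level p = L - n \<and> thr \<le> Fprime fmin fmax ?P p}"
  have nL: "n \<le> L" using Suc.prems by simp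
  have cP: "card ?P \<le> K" using Suc by simp
  have Psub: "?P \<subseteq> T1 \<times> T2" using out_acc_levels by blast
  have finP: "finite ?P" using Psub fin finite_subset by blast
  have finN: "finite ?New" using fin by (rule finite_subset[rotated]) auto
  have disj: "?P \<inter> ?New = {}"
  proof -
    { fix p assume "p \<in> ?P" "p \<in> ?New"
      then obtain j where "j < n" "level p = L - j" "level p = L - n" using out_acc_levels by blast
      then have False using nL by linarith }
    then show ?thesis by blast
  qed
  have eq: "out_acc T1 T2 L thr fmin fmax (Suc n) = ?P \<union> ?New" by (simp add: Let_def)
  show ?case
  proof (rule ccontr)
    assume "\<not> card (out_acc T1 T2 L thr fmin fmax (Suc n)) \<le> K"
    then have big: "card ?P + card ?New > K" using eq card_Un_disjoint[OF finP finN disj] by simp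
    have "Suc K - card ?P \<le> card ?New" using big by simp
    then obtain Q where Q: "Q \<subseteq> ?New" "card Q = Suc K - card ?P" "finite Q"
      by (rule obtain_subset_with_card_n)
    have disjQ: "?P \<inter> Q = {}" using disj Q(1) by blast
    have "card (?P \<union> Q) = Suc K" using card_Un_disjoint[OF finP Q(3) disjQ] Q(2) cP by simp
    moreover have "?P \<union> Q \<subseteq> T1 \<times> T2" using Psub Q(1) by blast
    moreover have "valid fmin fmax thr (?P \<union> Q)"
      using step_valid[OF nL out_acc_valid Q(1)] Suc.prems by simp
    ultimately show False using bad by blast
  qed
qed

lemma final_arith:
  fixes A \<phi> \<epsilon> :: real
  assumes A: "A \<ge> 1" and ph: "\<phi> > 0" and e: "\<epsilon> > 0"
    and c1: "(1 + A) * \<epsilon> \<le> \<phi> / 2" and c2: "A^2 * \<epsilon> \<le> \<phi>^2 / 4"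
  shows "A / \<phi> \<le> 2 / (A * \<epsilon>) * (\<phi> - (1 + A) * \<epsilon> - sqrt ((\<phi> - (1 + A) * \<epsilon>)\<^sup>2 - A\<^sup>2 * \<epsilon>))"
proof -
  define x where "x = \<phi> - (1 + A) * \<epsilon>"
  have x1: "x \<ge> \<phi> / 2" and x2: "x \<le> \<phi>" using c1 A e unfolding x_def by (auto simp: mult_nonneg_nonneg)
  have xpos: "x > 0" using x1 ph by simp
  have "\<phi>^2 / 4 \<le> x^2"
  proof -
    have "(\<phi>/2)^2 \<le> x^2" using x1 ph by (intro power_mono) auto
    then show ?thesis by (simp add: power_divide)
  qed
  then have arg: "x^2 - A^2 * \<epsilon> \<ge> 0" using c2 by simp
  define s where "s = sqrt (x^2 - A^2 * \<epsilon>)"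
  have s0: "s \<ge> 0" unfolding s_def using arg by simp
  have s2: "s^2 = x^2 - A^2 * \<epsilon>" unfolding s_def using arg by simp
  have sx: "s \<le> x"
  proof -
    have "s \<le> sqrt (x^2)" unfolding s_def using A e by (intro real_sqrt_le_mono) auto
    then show ?thesis using xpos by simp
  qed
  have xs: "x + s > 0" using xpos s0 by simp
  have prod: "(x - s) * (x + s) = A^2 * \<epsilon>" using s2 by (simp add: algebra_simps power2_eq_square)
  then have diff: "x - s = A^2 * \<epsilon> / (x + s)" using xs by (simp add: field_simps)
  have Ae: "A * \<epsilon> > 0" using A e by simp
  have rhs: "2 / (A * \<epsilon>) * (x - s) = 2 * A / (x + s)"
    unfolding diff using Ae xs e by (simp add: field_simps power2_eq_square)
  have "A / \<phi> \<le> 2 * A / (x + s)"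
  proof -
    have "x + s \<le> 2 * \<phi>" using sx x2 by simp
    then have "A * (x + s) \<le> A * (2 * \<phi>)" using A by (intro mult_left_mono) auto
    then show ?thesis using A ph xs by (simp add: field_simps)
  qed
  then show ?thesis using rhs unfolding x_def[symmetric] s_def[symmetric] by simp
qed

lemma cond_eq: "((take (length (fst q)) (fst e), take (length (snd q)) (snd e)) = q) = pleq e q"
  by (cases q) (auto simp: pleq_def prefix_take_iff)

lemma est_bounds:
  assumes run: "alg_run h1 h2 m (\<lambda>_. Map.empty) stream st" and m: "m > 0"
    and lens: "\<And>i. i < length stream \<Longrightarrow> length (fst (fst (stream ! i))) = h1 \<and> length (snd (fst (stream ! i))) = h2"
  shows "est_fmax m st q \<le> (\<Sum>i\<in>{..<length stream}. real (snd (stream!i)) * (if pleq (fst (stream!i)) q then 1 else 0))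
            + real (sum_list (map snd stream)) / real m"
    and "(\<Sum>i\<in>{..<length stream}. real (snd (stream!i)) * (if pleq (fst (stream!i)) q then 1 else 0))
            \<le> est_fmin m st q + real (sum_list (map snd stream)) / real m"
proof -
  define g where "g = (\<Sum>i\<in>{..<length stream}. real (snd (stream!i)) * (if pleq (fst (stream!i)) q then 1 else 0))"
  define T where "T = sum_list (map snd stream)"
  define d1 where "d1 = length (fst q)"
  define d2 where "d2 = length (snd q)"
  have lab: "label q = (d1, d2)" unfolding label_def d1_def d2_def by simp
  have inv: "alginv h1 h2 m st stream" using alginv_run[OF run alginv_empty] by simp
  have "est_fmax m st q \<le> g + real T / real m \<and> g \<le> est_fmin m st q + real T / real m"
  proof (cases "d1 \<le> h1 \<and> d2 \<le> h2")
    case True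
    then have ss: "ssinv m (st (d1, d2)) (fcnt d1 d2 stream) T" using inv unfolding alginv_def T_def by blast
    have "fcnt d1 d2 stream q = (\<Sum>i\<in>{..<length stream}. (if pleq (fst (stream!i)) q then snd (stream!i) else 0))"
      unfolding fcnt_def d1_def d2_def
      by (simp add: sum_list_sum_nth atLeast0LessThan case_prod_beta cond_eq)
    then have gq: "g = real (fcnt d1 d2 stream q)" unfolding g_def by (auto simp: of_nat_sum intro!: sum.cong)
    show ?thesis using ssinv_fmax[OF ss m, of q] ssinv_fmin[OF ss m, of q] gq lab
      unfolding est_fmax_def est_fmin_def by simp
  next
    case False
    then have emp: "st (d1, d2) = Map.empty" using inv unfolding alginv_def by blast
    have "g = 0" unfolding g_def
    proof (intro sum.neutral ballI)
      fix i assume "i \<in> {..<length stream}"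
      then have l: "length (fst (fst (stream ! i))) = h1" "length (snd (fst (stream ! i))) = h2" using lens by auto
      have "\<not> pleq (fst (stream!i)) q"
      proof
        assume "pleq (fst (stream!i)) q"
        then have "d1 \<le> h1" "d2 \<le> h2" using l prefix_length_le unfolding pleq_def d1_def d2_def by metis+
        then show False using False by simp
      qed
      then show "real (snd (stream!i)) * (if pleq (fst (stream!i)) q then 1 else 0) = 0" by simp
    qed
    moreover have "ss_fmax m (st (label q)) q = 0" "ss_fmin m (st (label q)) q = 0"
      using emp lab m unfolding ss_fmax_def ss_fmin_def by auto
    ultimately show ?thesis unfolding est_fmax_def est_fmin_def by simp
  qed
  then show "est_fmax m st q \<le> (\<Sum>i\<in>{..<length stream}. real (snd (stream!i)) * (if pleq (fst (stream!i)) q then 1 else 0))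
            + real (sum_list (map snd stream)) / real m"
    and "(\<Sum>i\<in>{..<length stream}. real (snd (stream!i)) * (if pleq (fst (stream!i)) q then 1 else 0))
            \<le> est_fmin m st q + real (sum_list (map snd stream)) / real m"
    unfolding g_def T_def by auto
qed

theorem theorem5:
  fixes h1 h2 :: nat and \<phi> :: real
  assumes "0 < \<phi>" and "\<phi> \<le> 1"
  shows "\<exists>\<epsilon>0 > 0. \<forall>(T1 :: 'a list set) (T2 :: 'a list set) (m :: nat)
            (stream :: ('a pfx \<times> nat) list) (st :: 'a alg_state).
     is_tree T1 h1 \<longrightarrow> is_tree T2 h2 \<longrightarrow> m > 0 \<longrightarrow> 1 / real m < \<epsilon>0 \<longrightarrow>
     stream \<noteq> [] \<longrightarrow>
     (\<forall>((e1, e2), c) \<in> set stream. e1 \<in> T1 \<and> length e1 = h1 \<and> e2 \<in> T2 \<and> length e2 = h2 \<and> c > 0) \<longrightarrow>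
     alg_run h1 h2 m (\<lambda>_. Map.empty) stream st \<longrightarrow>
     (let \<epsilon> = 1 / real m; A = real (1 + min h1 h2);
          N = real (sum_list (map snd stream));
          P = hhh_output T1 T2 h1 h2 m st \<phi> N
      in real (card P) \<le> 2 / (A * \<epsilon>) *
           (\<phi> - (1 + A) * \<epsilon> - sqrt ((\<phi> - (1 + A) * \<epsilon>)\<^sup>2 - A\<^sup>2 * \<epsilon>)))"
proof -
  have ph: "\<phi> > 0" using assms by simp
  define A where "A = real (1 + min h1 h2)"
  have A1: "A \<ge> 1" unfolding A_def by simp
  define K where "K = nat \<lfloor>A / \<phi>\<rfloor>"
  have AP0: "A / \<phi> \<ge> 0" using A1 ph by simp
  have K1: "real K \<le> A / \<phi>" unfolding K_def using AP0 by simp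
  have "A / \<phi> < real K + 1" unfolding K_def using AP0 by linarith
  then have K2: "A < \<phi> * real (Suc K)" using ph by (simp add: field_simps)
  define C where "C = real (Suc K) * (1 + real (Suc K) + real (Suc K)^2)"
  have C0: "C > 0" unfolding C_def by (simp add: add_pos_nonneg)
  define e0 where "e0 = min ((\<phi> * real (Suc K) - A) / C) (min (\<phi> / (2 * (1 + A))) (\<phi>^2 / (4 * A^2)))"
  have e0: "e0 > 0" unfolding e0_def using K2 C0 ph A1 by auto
  show ?thesis
  proof (intro exI[of _ e0] conjI allI impI)
    show "0 < e0" by (rule e0)
    fix T1 :: "'a list set" and T2 :: "'a list set" and m :: nat and stream :: "('a pfx \<times> nat) list" and st :: "'a alg_state"
    assume t1: "is_tree T1 h1" and t2: "is_tree T2 h2" and m: "m > 0" and me: "1 / real m < e0"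
      and ne: "stream \<noteq> []"
      and sv: "\<forall>((e1, e2), c) \<in> set stream. e1 \<in> T1 \<and> length e1 = h1 \<and> e2 \<in> T2 \<and> length e2 = h2 \<and> c > 0"
      and run: "alg_run h1 h2 m (\<lambda>_. Map.empty) stream st"
    define \<epsilon> where "\<epsilon> = 1 / real m"
    have eps: "\<epsilon> > 0" unfolding \<epsilon>_def using m by simp
    define N where "N = real (sum_list (map snd stream))"
    have sv': "length (fst (fst (stream ! i))) = h1 \<and> length (snd (fst (stream ! i))) = h2 \<and> snd (stream ! i) > 0"
      if "i < length stream" for i
    proof -
      have "stream ! i \<in> set stream" using that by simp
      moreover obtain e1 e2 c where "stream ! i = ((e1, e2), c)" by (metis prod.collapse)
      ultimately show ?thesis using sv by auto
    qed
    have N0: "N > 0"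
    proof -
      obtain x where x: "x \<in> set stream" using ne by (cases stream) auto
      then obtain i where i: "i < length stream" "stream ! i = x" by (auto simp: in_set_conv_nth)
      have "snd x \<in> set (map snd stream)" using x by simp
      then have "snd x \<le> sum_list (map snd stream)" by (rule member_le_sum_list; simp)
      moreover have "snd x > 0" using sv' i by auto
      ultimately show ?thesis unfolding N_def by simp
    qed
    define fmin where "fmin = est_fmin m st"
    define fmax where "fmax = est_fmax m st"
    define I where "I = {..<length stream}"
    define W where "W i = real (snd (stream ! i))" for i
    define E where "E i = fst (stream ! i)" for i
    have sumW: "(\<Sum>i\<in>I. W i) = N"
      unfolding I_def W_def N_def by (simp add: sum_list_sum_nth atLeast0LessThan of_nat_sum)
    have fin: "finite (T1 \<times> T2)" using t1 t2 unfolding is_tree_def by auto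
    have bad: "card X \<noteq> Suc K" if X: "X \<subseteq> T1 \<times> T2" "valid fmin fmax (\<phi> * N) X" for X
    proof
      assume cX: "card X = Suc K"
      have finX: "finite X" using X(1) fin finite_subset by blast
      have "\<phi> * N * real (card X) \<le> real (1 + min h1 h2) * (\<Sum>i\<in>I. W i)
          + N / real m * real (card X) * (1 + real (card X) + real (card X)^2)"
      proof (rule key[OF _ finX])
        show "finite I" unfolding I_def by simp
        show "\<And>i. i \<in> I \<Longrightarrow> W i \<ge> 0" unfolding W_def by simp
        show "\<And>i. i \<in> I \<Longrightarrow> length (fst (E i)) = h1 \<and> length (snd (E i)) = h2"
          unfolding I_def E_def using sv' by auto
        show "\<And>q. fmax q \<le> (\<Sum>i\<in>I. W i * (if pleq (E i) q then 1 else 0)) + N / real m"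
          unfolding fmax_def I_def W_def E_def N_def using est_bounds(1)[OF run m] sv' by blast
        show "\<And>q. (\<Sum>i\<in>I. W i * (if pleq (E i) q then 1 else 0)) \<le> fmin q + N / real m"
          unfolding fmin_def I_def W_def E_def N_def using est_bounds(2)[OF run m] sv' by blast
        show "N / real m \<ge> 0" using N0 by simp
        show "\<And>p. p \<in> X \<Longrightarrow> \<phi> * N \<le> Fprime fmin fmax X p" using X(2) unfolding valid_def by blast
      qed
      moreover have eqC: "N / real m * real (card X) * (1 + real (card X) + real (card X)^2) = N * \<epsilon> * C"
        unfolding cX C_def \<epsilon>_def by simp
      ultimately have "\<phi> * N * real (Suc K) \<le> A * N + N * \<epsilon> * C"
        using cX sumW unfolding A_def by simp
      then have "N * (\<phi> * real (Suc K)) \<le> N * (A + \<epsilon> * C)" by (simp add: algebra_simps)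
      then have "\<phi> * real (Suc K) \<le> A + \<epsilon> * C" using N0 by simp
      moreover have "\<epsilon> < (\<phi> * real (Suc K) - A) / C" using me unfolding e0_def \<epsilon>_def by simp
      then have "\<epsilon> * C < \<phi> * real (Suc K) - A" using C0 by (simp add: field_simps)
      ultimately show False by simp
    qed
    have cardP: "card (out_acc T1 T2 (h1 + h2) (\<phi> * N) fmin fmax (h1 + h2 + 1)) \<le> K"
      by (rule out_acc_card[OF fin bad]) auto
    have c1: "(1 + A) * \<epsilon> \<le> \<phi> / 2"
    proof -
      have "\<epsilon> < \<phi> / (2 * (1 + A))" using me unfolding e0_def \<epsilon>_def by simp
      then show ?thesis using A1 by (simp add: field_simps)
    qed
    have c2: "A^2 * \<epsilon> \<le> \<phi>^2 / 4"
    proof -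
      have "\<epsilon> < \<phi>^2 / (4 * A^2)" using me unfolding e0_def \<epsilon>_def by simp
      then show ?thesis using A1 by (simp add: field_simps)
    qed
    have fa: "A / \<phi> \<le> 2 / (A * \<epsilon>) * (\<phi> - (1 + A) * \<epsilon> - sqrt ((\<phi> - (1 + A) * \<epsilon>)\<^sup>2 - A\<^sup>2 * \<epsilon>))"
      by (rule final_arith[OF A1 ph eps c1 c2])
    have "real (card (hhh_output T1 T2 h1 h2 m st \<phi> N)) \<le> real K"
      using cardP unfolding hhh_output_def fmin_def fmax_def by simp
    with K1 fa show "let \<epsilon> = 1 / real m; A = real (1 + min h1 h2);
          N = real (sum_list (map snd stream));
          P = hhh_output T1 T2 h1 h2 m st \<phi> N
      in real (card P) \<le> 2 / (A * \<epsilon>) *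
           (\<phi> - (1 + A) * \<epsilon> - sqrt ((\<phi> - (1 + A) * \<epsilon>)\<^sup>2 - A\<^sup>2 * \<epsilon>))"
      unfolding Let_def \<epsilon>_def[symmetric] A_def[symmetric] N_def[symmetric] by linarith
  qed
qed

end
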